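(* Under the assumptions of the explicit-formulae proposition (piecewise linear concave non-positive increasing $v$ on grid $x_1<\dots<x_N$, $-\infty$ below $x_1$ and constant above $x_N$; $u$ concave increasing with $u^\dagger$ continuous on $(0,\infty)$ and $\lim_{p\to0}u^\dagger(p)=\infty$; $s\in(0,1)$), $\lim_{\eta\to\infty}X^\eta=\gamma_{\min}+s^Ce^{-r\delta t}x_1$.
   Context: $\gamma_{\min}=\inf\{x:u(x)>-\infty\}$. $\Phi$ is the standard normal distribution function, $M=|\mu-r|\sqrt{\delta t}/\sigma$, $Q(x)=\Phi(M+\Phi^{-1}(x))$, $q^A_{BS}=Q'$. For concave increasing $g$, $g^\dagger(p)=\inf\{x:p\in\partial g(x)\}$, $\partial g$ the superdifferential. $C\in\{0,1\}$. For $\eta>0$: $f^\eta(x)=v^\dagger(\eta s^{C-1}e^{-r\delta t}q^A_{BS}(x))$, $\gamma^\eta=u^\dagger\big(-\frac{\eta}{\delta t}\big(-1+s\int_0^1(1+v(f^\eta(x)))\mathrm dx\big)^{-1}\big)$, $X^\eta=\gamma^\eta+s^C\int_0^1e^{-r\delta t}q^A_{BS}(x)f^\eta(x)\mathrm dx$. *)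

theory Defs
  imports "HOL-Probability.Probability"
begin

definition Phi :: "real \<Rightarrow> real" where
  "Phi x = integral {..x} std_normal_density"

definition Phi_inv :: "real \<Rightarrow> real" where
  "Phi_inv y = (THE z. Phi z = y)"

definition Mpar :: "real \<Rightarrow> real \<Rightarrow> real \<Rightarrow> real \<Rightarrow> real" where
  "Mpar \<mu> r \<sigma> dt = \<bar>\<mu> - r\<bar> * sqrt dt / \<sigma>"

definition Qfun :: "real \<Rightarrow> real \<Rightarrow> real" where
  "Qfun M x = Phi (M + Phi_inv x)"

definition qBS :: "real \<Rightarrow> real \<Rightarrow> real" where
  "qBS M x = deriv (Qfun M) x"

definition econcave :: "(real \<Rightarrow> ereal) \<Rightarrow> bool" where
  "econcave g \<longleftrightarrow> (\<forall>x y t. 0 \<le> t \<longrightarrow> t \<le> 1 \<longrightarrow>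
      ereal t * g x + ereal (1 - t) * g y \<le> g (t * x + (1 - t) * y))"

definition superdiff :: "(real \<Rightarrow> ereal) \<Rightarrow> real \<Rightarrow> real set" where
  "superdiff g x = {p. \<bar>g x\<bar> \<noteq> \<infinity> \<and> (\<forall>y. g y \<le> g x + ereal (p * (y - x)))}"

text \<open>g^dagger(p) = inf {x. p in superdiff g x}, with inf of the empty set = +oo.\<close>
definition gdagger :: "(real \<Rightarrow> ereal) \<Rightarrow> real \<Rightarrow> ereal" where
  "gdagger g p = Inf (ereal ` {x. p \<in> superdiff g x})"

definition gamma_min :: "(real \<Rightarrow> ereal) \<Rightarrow> ereal" where
  "gamma_min u = Inf (ereal ` {x. u x > -\<infinity>})"

definition f_eta :: "(real \<Rightarrow> ereal) \<Rightarrow> real \<Rightarrow> nat \<Rightarrow> real \<Rightarrow> real \<Rightarrow> real \<Rightarrow> real \<Rightarrow> real \<Rightarrow> real" where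
  "f_eta v s C r dt M \<eta> x =
     real_of_ereal (gdagger v (\<eta> * s powr (real C - 1) * exp (- r * dt) * qBS M x))"

definition gamma_eta :: "(real \<Rightarrow> ereal) \<Rightarrow> (real \<Rightarrow> ereal) \<Rightarrow> real \<Rightarrow> nat \<Rightarrow> real \<Rightarrow> real \<Rightarrow> real \<Rightarrow> real \<Rightarrow> ereal" where
  "gamma_eta u v s C r dt M \<eta> =
     gdagger u (- (\<eta> / dt) * inverse (-1 + s * integral {0..1}
        (\<lambda>x. 1 + real_of_ereal (v (f_eta v s C r dt M \<eta> x)))))"

definition X_eta :: "(real \<Rightarrow> ereal) \<Rightarrow> (real \<Rightarrow> ereal) \<Rightarrow> real \<Rightarrow> nat \<Rightarrow> real \<Rightarrow> real \<Rightarrow> real \<Rightarrow> real \<Rightarrow> ereal" where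
  "X_eta u v s C r dt M \<eta> =
     gamma_eta u v s C r dt M \<eta> +
     ereal (s ^ C * integral {0..1} (\<lambda>x. exp (- r * dt) * qBS M x * f_eta v s C r dt M \<eta> x))"

end

theory Submission
  imports Defs
begin


abbreviation phi where "phi \<equiv> std_normal_density"

lemma phi_int: "integrable lborel phi" "integral\<^sup>L lborel phi = 1"
  using std_normal_moment_even[of 0] by (auto dest: has_bochner_integral_integrable has_bochner_integral_integral_eq)

lemma phi_pos: "phi x > 0" by (simp add: normal_density_pos)

lemma phi_cont: "continuous_on A phi"
  unfolding std_normal_density_def by (intro continuous_intros) auto

lemma phi_set_int: "set_integrable lborel A phi" if "A \<in> sets borel"
  unfolding set_integrable_def using phi_int(1) that
  by (intro integrable_mult_indicator) auto

lemma Phi_has_int: "(phi has_integral Phi x) {..x}"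
proof -
  have "phi integrable_on {..x}" "(LINT y : {..x} | lborel. phi y) = integral {..x} phi"
    using set_borel_integral_eq_integral[OF phi_set_int[of "{..x}"]] by auto
  then show ?thesis unfolding Phi_def by (simp add: integrable_integral)
qed

lemma Phi_LINT: "Phi x = (LINT y : {..x} | lborel. phi y)"
  using set_borel_integral_eq_integral(2)[OF phi_set_int[of "{..x}"]] unfolding Phi_def by simp

lemma Phi_diff: "x \<le> y \<Longrightarrow> Phi y = Phi x + integral {x..y} phi"
proof -
  assume xy: "x \<le> y"
  have i2: "(phi has_integral integral {x..y} phi) {x..y}"
    using integrable_continuous_interval[OF phi_cont] by (simp add: integrable_integral)
  have "(phi has_integral (Phi x + integral {x..y} phi)) ({..x} \<union> {x..y})"
    by (rule has_integral_Un[OF Phi_has_int i2]) (auto simp: negligible_sing[of x] intro: negligible_subset[of "{x}"])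
  moreover have "{..x} \<union> {x..y} = {..y}" using xy by auto
  ultimately show ?thesis using Phi_has_int[of y] has_integral_unique by metis
qed

lemma Phi_deriv: "DERIV Phi x :> phi x"
proof -
  have d: "((\<lambda>t. integral {x-1..t} phi) has_real_derivative phi x) (at x within {x-1..x+1})"
    by (rule integral_has_real_derivative[OF phi_cont]) auto
  have d2: "((\<lambda>t. Phi (x-1) + integral {x-1..t} phi) has_real_derivative phi x) (at x)"
    using d at_within_Icc_at[of "x-1" x "x+1"] by (auto intro!: derivative_eq_intros)
  show ?thesis
  proof (rule has_field_derivative_transform_within_open[OF d2, of "{x-1<..}"])
    fix t assume "t \<in> {x-1<..}" then show "Phi (x - 1) + integral {x - 1..t} phi = Phi t"
      using Phi_diff[of "x-1" t] by simp
  qed auto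
qed

lemma Phi_cont: "isCont Phi x" using Phi_deriv DERIV_isCont by blast

lemma Phi_strict: "x < y \<Longrightarrow> Phi x < Phi y"
  by (rule DERIV_pos_imp_increasing) (use Phi_deriv phi_pos in blast)+

lemma Phi_mono: "x \<le> y \<Longrightarrow> Phi x \<le> Phi y"
  using Phi_strict by (cases "x = y") (auto intro: less_imp_le)

lemma Phi_top: "(Phi \<longlongrightarrow> 1) at_top"
proof -
  have "((\<lambda>t. integral\<^sup>L lborel (\<lambda>y. indicator {..t} y *\<^sub>R phi y)) \<longlongrightarrow> integral\<^sup>L lborel phi) at_top"
  proof (rule integral_dominated_convergence_at_top[where w=phi])
    show "AE x in lborel. ((\<lambda>i. indicator {..i} x *\<^sub>R phi x) \<longlongrightarrow> phi x) at_top"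
    proof (rule AE_I2)
      fix x :: real
      have "eventually (\<lambda>i. indicator {..i} x *\<^sub>R phi x = phi x) at_top"
        using eventually_ge_at_top[of x] by eventually_elim auto
      then show "((\<lambda>i. indicator {..i} x *\<^sub>R phi x) \<longlongrightarrow> phi x) at_top"
        by (rule tendsto_eventually)
    qed
    show "\<forall>\<^sub>F i in at_top. AE x in lborel. norm (indicator {..i} x *\<^sub>R phi x) \<le> phi x"
      by (auto simp: indicator_def)
  qed (auto simp: phi_int)
  moreover have "Phi = (\<lambda>t. integral\<^sup>L lborel (\<lambda>y. indicator {..t} y *\<^sub>R phi y))"
    by (rule ext) (simp add: Phi_LINT set_lebesgue_integral_def)
  ultimately show ?thesis using phi_int(2) by simp
qed

lemma Phi_bot: "(Phi \<longlongrightarrow> 0) at_bot"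
proof -
  have "((\<lambda>t. integral\<^sup>L lborel (\<lambda>y. indicator {..-t} y *\<^sub>R phi y)) \<longlongrightarrow> integral\<^sup>L lborel (\<lambda>y::real. 0::real)) at_top"
  proof (rule integral_dominated_convergence_at_top[where w=phi and M=lborel and f="\<lambda>y. 0" and s="\<lambda>t y. indicator {..-t} y *\<^sub>R phi y"])
    show "AE x in lborel. ((\<lambda>i. indicator {..-i} x *\<^sub>R phi x) \<longlongrightarrow> 0) at_top"
    proof (rule AE_I2)
      fix x :: real
      have "eventually (\<lambda>i. indicator {..-i} x *\<^sub>R phi x = 0) at_top"
        using eventually_gt_at_top[of "-x"] by eventually_elim (auto simp: indicator_def)
      then show "((\<lambda>i. indicator {..-i} x *\<^sub>R phi x) \<longlongrightarrow> 0) at_top"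
        by (rule tendsto_eventually)
    qed
    show "\<forall>\<^sub>F i in at_top. AE x in lborel. norm (indicator {..-i} x *\<^sub>R phi x) \<le> phi x"
      by (auto simp: indicator_def)
  qed (auto simp: phi_int)
  then have "((\<lambda>t. Phi (-t)) \<longlongrightarrow> 0) at_top" by (simp add: Phi_LINT set_lebesgue_integral_def)
  then show ?thesis by (simp add: filterlim_at_bot_mirror)
qed

lemma Phi_pos: "Phi x > 0"
proof (rule ccontr)
  assume "\<not> Phi x > 0"
  then have a: "Phi (x-1) < 0" using Phi_strict[of "x-1" x] by simp
  have "eventually (\<lambda>t. Phi t > Phi (x-1)) at_bot"
    using order_tendstoD(1)[OF Phi_bot a] .
  then obtain N where "\<And>t. t \<le> N \<Longrightarrow> Phi t > Phi (x-1)" by (auto simp: eventually_at_bot_linorder)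
  then have "Phi (min N (x-1)) > Phi (x-1)" by simp
  moreover have "Phi (min N (x-1)) \<le> Phi (x-1)" by (rule Phi_mono) simp
  ultimately show False by simp
qed

lemma Phi_lt1: "Phi x < 1"
proof (rule ccontr)
  assume "\<not> Phi x < 1"
  then have a: "Phi (x+1) > 1" using Phi_strict[of x "x+1"] by simp
  have "eventually (\<lambda>t. Phi t < Phi (x+1)) at_top"
    using order_tendstoD(2)[OF Phi_top a] .
  then obtain N where "\<And>t. t \<ge> N \<Longrightarrow> Phi t < Phi (x+1)" by (auto simp: eventually_at_top_linorder)
  then have "Phi (max N (x+1)) < Phi (x+1)" by simp
  moreover have "Phi (max N (x+1)) \<ge> Phi (x+1)" by (rule Phi_mono) simp
  ultimately show False by simp
qed

lemma Phi_inj: "Phi a = Phi b \<Longrightarrow> a = b"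
  using Phi_strict by (metis less_irrefl linorder_neqE_linordered_idom)

lemma Phi_surj: assumes "0 < y" "y < 1" shows "\<exists>z. Phi z = y"
proof -
  have "eventually (\<lambda>t. Phi t < y) at_bot" using order_tendstoD(2)[OF Phi_bot assms(1)] .
  then obtain a where a: "Phi a < y" by (auto simp: eventually_at_bot_linorder)
  have "eventually (\<lambda>t. Phi t > y) at_top" using order_tendstoD(1)[OF Phi_top assms(2)] .
  then obtain b where b: "Phi b > y" by (auto simp: eventually_at_top_linorder)
  have "a \<le> b" using a b Phi_mono[of b a] by (cases "a \<le> b") auto
  from IVT[of Phi a y b] a b this Phi_cont show ?thesis by auto
qed

lemma Phi_Phi_inv: "0 < y \<Longrightarrow> y < 1 \<Longrightarrow> Phi (Phi_inv y) = y"
  unfolding Phi_inv_def using Phi_surj Phi_inj by (metis (mono_tags, lifting) theI)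

lemma Phi_inv_Phi: "Phi_inv (Phi z) = z"
  unfolding Phi_inv_def using Phi_inj by blast

lemma Phi_inv_less: "0 < y \<Longrightarrow> y < 1 \<Longrightarrow> Phi_inv y < B \<longleftrightarrow> y < Phi B"
  by (metis Phi_Phi_inv Phi_strict Phi_mono not_less order.strict_iff_order Phi_inj)

lemma Phi_inv_cont: assumes "0 < y" "y < 1" shows "isCont Phi_inv y"
proof -
  have "isCont Phi_inv (Phi (Phi_inv y))"
    by (rule isCont_inverse_function2[of "Phi_inv y - 1" _ "Phi_inv y + 1"]) (auto simp: Phi_inv_Phi Phi_cont)
  then show ?thesis using Phi_Phi_inv assms by simp
qed

lemma Phi_inv_deriv: assumes "0 < y" "y < 1" shows "DERIV Phi_inv y :> inverse (phi (Phi_inv y))"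
  by (rule DERIV_inverse_function[OF Phi_deriv _ assms, of Phi_inv])
     (use phi_pos[of "Phi_inv y"] Phi_Phi_inv Phi_inv_cont assms in auto)

lemma Phi_inv_bot: "filterlim Phi_inv at_bot (at_right 0)"
  unfolding filterlim_at_bot
proof
  fix Z :: real
  have "eventually (\<lambda>y. y \<in> {0<..<min 1 (Phi (Z - 1))}) (at_right (0::real))"
    using Phi_pos[of "Z-1"] by (intro eventually_at_right_real) auto
  then show "eventually (\<lambda>y. Phi_inv y \<le> Z) (at_right 0)"
  proof eventually_elim
    case (elim y) then have "Phi_inv y < Z - 1" using Phi_inv_less[of y "Z-1"] by auto
    then show ?case by simp
  qed
qed

lemma Phi_inv_top: "filterlim Phi_inv at_top (at_left 1)"
  unfolding filterlim_at_top
proof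
  fix Z :: real
  have "eventually (\<lambda>y. y \<in> {max 0 (Phi (Z + 1))<..<1}) (at_left (1::real))"
    using Phi_lt1[of "Z+1"] by (intro eventually_at_left_real) auto
  then show "eventually (\<lambda>y. Z \<le> Phi_inv y) (at_left 1)"
  proof eventually_elim
    case (elim y) then have "\<not> Phi_inv y < Z + 1" using Phi_inv_less[of y "Z+1"] by auto
    then show ?case by simp
  qed
qed

definition qq :: "real \<Rightarrow> real \<Rightarrow> real" where
  "qq M y = phi (M + Phi_inv y) * inverse (phi (Phi_inv y))"

lemma Q_deriv: assumes "0 < y" "y < 1" shows "DERIV (Qfun M) y :> qq M y"
  unfolding Qfun_def[abs_def] qq_def
  by (rule DERIV_chain2[OF Phi_deriv]) (auto intro!: derivative_eq_intros Phi_inv_deriv assms)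

lemma qBS_eq: "0 < y \<Longrightarrow> y < 1 \<Longrightarrow> qBS M y = qq M y"
  unfolding qBS_def using Q_deriv DERIV_imp_deriv by blast

lemma qq_pos: "qq M y > 0"
  unfolding qq_def using phi_pos by simp

lemma qq_cont: "0 < y \<Longrightarrow> y < 1 \<Longrightarrow> isCont (qq M) y"
  unfolding qq_def std_normal_density_def
  by (intro continuous_intros Phi_inv_cont) (auto simp: phi_pos)

lemma Q_lim0: "(Qfun M \<longlongrightarrow> 0) (at_right 0)"
proof -
  have "filterlim (\<lambda>y. M + Phi_inv y) at_bot (at_right 0)"
    using filterlim_tendsto_add_at_bot_iff[OF tendsto_const, of M] Phi_inv_bot by blast
  from filterlim_compose[OF Phi_bot this] show ?thesis unfolding Qfun_def[abs_def] .
qed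

lemma Q_lim1: "(Qfun M \<longlongrightarrow> 1) (at_left 1)"
proof -
  have "filterlim (\<lambda>y. M + Phi_inv y) at_top (at_left 1)"
    using filterlim_tendsto_add_at_top[OF tendsto_const Phi_inv_top] .
  from filterlim_compose[OF Phi_top this] show ?thesis unfolding Qfun_def[abs_def] .
qed

lemma q_int: "set_integrable lborel {0<..<1} (qq M)" "(LINT y : {0<..<1} | lborel. qq M y) = 1"
proof -
  have *: "set_integrable lborel (einterval (ereal 0) (ereal 1)) (qq M)" "(LBINT x=ereal 0..ereal 1. qq M x) = 1 - 0"
    by (rule interval_integral_FTC_nonneg(1)[where F="Qfun M" and a="ereal 0" and b="ereal 1" and A=0 and B=1];
        auto simp: ereal_tendsto_simps1 Q_deriv qq_cont less_imp_le[OF qq_pos] Q_lim0 Q_lim1)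
       (rule interval_integral_FTC_nonneg(2)[where F="Qfun M" and a="ereal 0" and b="ereal 1" and A=0 and B=1];
        auto simp: ereal_tendsto_simps1 Q_deriv qq_cont less_imp_le[OF qq_pos] Q_lim0 Q_lim1)
  then show "set_integrable lborel {0<..<1} (qq M)" by simp
  show "(LINT y : {0<..<1} | lborel. qq M y) = 1"
    using *(2) by (simp add: interval_lebesgue_integral_le_eq)
qed



lemma superdiff_fin: "p \<in> superdiff g x \<Longrightarrow> \<exists>a. g x = ereal a"
  unfolding superdiff_def by (cases "g x") auto

lemma superdiff_ineq: "p \<in> superdiff g x \<Longrightarrow> g y \<le> g x + ereal (p * (y - x))"
  unfolding superdiff_def by auto

lemma superdiff_mono: assumes "p \<in> superdiff g x" "p' \<in> superdiff g x'" "p < p'" shows "x' \<le> x"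
proof -
  obtain a b where a: "g x = ereal a" and b: "g x' = ereal b" using superdiff_fin assms by metis
  have "b \<le> a + p * (x' - x)" using superdiff_ineq[OF assms(1), of x'] a b by simp
  moreover have "a \<le> b + p' * (x - x')" using superdiff_ineq[OF assms(2), of x] a b by simp
  ultimately have "0 \<le> (p - p') * (x' - x)" by (simp add: algebra_simps)
  then show ?thesis using assms(3) by (metis diff_gt_0_iff_gt diff_less_0_iff_less mult_neg_pos not_le)
qed

lemma gdag_ne: assumes "gdagger g p \<noteq> \<infinity>" shows "\<exists>x. p \<in> superdiff g x"
proof (rule ccontr)
  assume "\<not> ?thesis"
  then have "{x. p \<in> superdiff g x} = {}" by auto
  then show False using assms by (simp add: gdagger_def top_ereal_def)
qed

lemma udag_lim:
  assumes fin: "\<And>p. p > 0 \<Longrightarrow> \<bar>gdagger u p\<bar> \<noteq> \<infinity>" and mono: "mono u"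
  shows "(gdagger u \<longlongrightarrow> gamma_min u) at_top"
proof (rule order_tendstoI)
  fix a assume a: "a < gamma_min u"
  have "gamma_min u \<le> gdagger u p" for p
    unfolding gdagger_def gamma_min_def
    by (rule Inf_superset_mono) (auto simp: superdiff_def)
  then show "eventually (\<lambda>p. a < gdagger u p) at_top" using a by (metis (mono_tags) always_eventually less_le_trans)
next
  fix a assume a: "gamma_min u < a"
  then obtain x0 where x0: "u x0 > -\<infinity>" "ereal x0 < a" unfolding gamma_min_def by (auto simp: Inf_less_iff)
  obtain b where b: "x0 < b" "ereal b \<le> a"
  proof (cases a)
    case (real r) then show ?thesis using that x0 by auto
  next
    case PInf then show ?thesis using that[of "x0+1"] by auto
  qed (use x0 in auto)
  have "gdagger u 1 \<noteq> \<infinity>" using fin[of 1] by auto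
  then obtain x' where x': "1 \<in> superdiff u x'" using gdag_ne by blast
  obtain c where c: "u x' = ereal c" using superdiff_fin[OF x'] by blast
  have "u x0 \<le> u x'" if "x0 \<le> x'" using mono that by (auto simp: mono_def)
  obtain d where d: "u x0 = ereal d"
  proof (cases "u x0")
    case PInf
    have "u x0 \<le> u (max x0 x')" using mono by (auto simp: mono_def)
    moreover have "u (max x0 x') \<le> u x' + ereal (1 * (max x0 x' - x'))" by (rule superdiff_ineq[OF x'])
    ultimately show ?thesis using PInf c by auto
  qed (use x0 in auto)
  define P where "P = max 2 ((\<bar>c - d\<bar> + 1) / (b - x0))"
  have "eventually (\<lambda>p. gdagger u p < a) at_top"
    using eventually_gt_at_top[of P]
  proof eventually_elim
    case (elim p)
    have p1: "p > 1" using elim unfolding P_def by auto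
    have "gdagger u p \<noteq> \<infinity>" using fin[of p] p1 by auto
    then obtain x where x: "p \<in> superdiff u x" using gdag_ne by blast
    have xx': "x \<le> x'" using superdiff_mono[OF x' x p1] .
    obtain e where e: "u x = ereal e" using superdiff_fin[OF x] by blast
    have "u x \<le> u x'" using mono xx' by (auto simp: mono_def)
    then have "e \<le> c" using c e by simp
    have "d \<le> e + p * (x0 - x)" using superdiff_ineq[OF x, of x0] d e by simp
    have "x < b"
    proof (rule ccontr)
      assume "\<not> x < b"
      then have "p * (x - x0) \<ge> p * (b - x0)" using p1 by (intro mult_left_mono) auto
      moreover have "p * (b - x0) > \<bar>c - d\<bar> + 1"
        using elim b(1) unfolding P_def by (auto simp: field_simps)
      ultimately show False using \<open>e \<le> c\<close> \<open>d \<le> e + p * (x0 - x)\<close> by (auto simp: algebra_simps)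
    qed
    have "gdagger u p \<le> ereal x" unfolding gdagger_def using x by (auto intro: Inf_lower)
    also have "\<dots> < ereal b" using \<open>x < b\<close> by simp
    finally show ?case using b(2) by simp
  qed
  then show "eventually (\<lambda>p. gdagger u p < a) at_top" .
qed



locale vset =
  fixes v :: "real \<Rightarrow> ereal" and w :: "real \<Rightarrow> real" and xg :: "nat \<Rightarrow> real" and N :: nat
  assumes N: "1 \<le> N"
    and grid: "\<And>i j. 1 \<le> i \<Longrightarrow> i < j \<Longrightarrow> j \<le> N \<Longrightarrow> xg i < xg j"
    and v_def: "\<And>x. v x = (if x < xg 1 then -\<infinity> else ereal (w x))"
    and w_lin: "\<And>i x. 1 \<le> i \<Longrightarrow> i < N \<Longrightarrow> x \<in> {xg i..xg (Suc i)} \<Longrightarrow>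
                 w x = w (xg i) + (w (xg (Suc i)) - w (xg i)) / (xg (Suc i) - xg i) * (x - xg i)"
    and w_const: "\<And>x. x \<ge> xg N \<Longrightarrow> w x = w (xg N)"
    and w_mono: "mono_on {xg 1..} w"
    and w_nonpos: "\<And>x. x \<ge> xg 1 \<Longrightarrow> w x \<le> 0"
begin

lemma xg_le: "i \<in> {1..N} \<Longrightarrow> xg 1 \<le> xg i \<and> xg i \<le> xg N"
  using grid[of 1 i] grid[of i N] by (cases "i = 1"; cases "i = N") auto

lemma grid_max:
  assumes p: "p \<ge> 0" and y: "y \<ge> xg 1"
  shows "\<exists>i\<in>{1..N}. w y - p * y \<le> w (xg i) - p * xg i"
proof (cases "y \<ge> xg N")
  case True
  then show ?thesis using N w_const[OF True] p by (intro bexI[of _ N]) (auto intro: mult_left_mono)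
next
  case False
  define I where "I = {i \<in> {1..N}. xg i \<le> y}"
  have fI: "finite I" "I \<noteq> {}" using y N unfolding I_def by auto
  define i where "i = Max I"
  have iI: "i \<in> I" using Max_in[OF fI] unfolding i_def .
  have iN: "i < N" using iI False unfolding I_def by (cases "i = N") auto
  have i1: "1 \<le> i" "xg i \<le> y" using iI unfolding I_def by auto
  have "xg (Suc i) > y"
  proof (rule ccontr)
    assume "\<not> ?thesis"
    then have "Suc i \<in> I" using iN i1 unfolding I_def by auto
    then show False using Max_ge[OF fI(1), of "Suc i"] unfolding i_def[symmetric] by simp
  qed
  define a where "a = xg i" define b where "b = xg (Suc i)"
  have ab: "a < b" using grid[of i "Suc i"] i1 iN unfolding a_def b_def by auto
  have yab: "a \<le> y" "y \<le> b" using i1 \<open>xg (Suc i) > y\<close> unfolding a_def b_def by auto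
  have wy: "w y = w a + (w b - w a) / (b - a) * (y - a)"
    using w_lin[OF i1(1) iN, of y] yab unfolding a_def b_def by auto
  define t where "t = (y - a) / (b - a)"
  have t: "0 \<le> t" "t \<le> 1" using ab yab unfolding t_def by (auto simp: field_simps)
  have tb: "t * (b - a) = y - a" using ab by (simp add: t_def)
  have tw: "t * (w b - w a) = (w b - w a) / (b - a) * (y - a)" by (simp add: t_def)
  have "(1 - t) * (w a - p * a) + t * (w b - p * b) = w a - p*a + t*(w b - w a) - p*(t*(b-a))"
    by (simp add: algebra_simps)
  then have eq: "w y - p * y = (1 - t) * (w a - p * a) + t * (w b - p * b)"
    unfolding tb tw wy by (simp add: algebra_simps)
  show ?thesis
  proof (cases "w a - p * a \<le> w b - p * b")
    case True
    have "w y - p * y \<le> (1 - t) * (w b - p * b) + t * (w b - p * b)"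
      unfolding eq using t True by (intro add_mono mult_left_mono) auto
    then show ?thesis using i1 iN unfolding b_def by (intro bexI[of _ "Suc i"]) (auto simp: algebra_simps)
  next
    case False
    have "w y - p * y \<le> (1 - t) * (w a - p * a) + t * (w a - p * a)"
      unfolding eq using t False by (intro add_mono mult_left_mono) auto
    then show ?thesis using i1 iN unfolding a_def by (intro bexI[of _ i]) (auto simp: algebra_simps)
  qed
qed

lemma superdiff_at_grid:
  assumes p: "p \<ge> 0" and k: "k \<in> {1..N}" and kmax: "\<And>i. i \<in> {1..N} \<Longrightarrow> w (xg i) - p * xg i \<le> w (xg k) - p * xg k"
  shows "p \<in> superdiff v (xg k)"
  unfolding superdiff_def
proof (intro CollectI conjI allI)
  have k1: "xg 1 \<le> xg k" using xg_le[OF k] by simp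
  then show "\<bar>v (xg k)\<bar> \<noteq> \<infinity>" using v_def[of "xg k"] by simp
  fix y
  show "v y \<le> v (xg k) + ereal (p * (y - xg k))"
  proof (cases "y < xg 1")
    case False
    then have "xg 1 \<le> y" by simp
    then obtain i where i: "i \<in> {1..N}" "w y - p * y \<le> w (xg i) - p * xg i" using grid_max[OF p] by blast
    have "w y \<le> w (xg k) + p * (y - xg k)" using kmax[OF i(1)] i(2) by (simp add: algebra_simps)
    then show ?thesis using False k1 v_def[of y] v_def[of "xg k"] by simp
  qed (simp add: v_def)
qed

lemma S_nonempty: assumes "p \<ge> 0" shows "\<exists>k\<in>{1..N}. p \<in> superdiff v (xg k)"
proof -
  define m where "m = Max ((\<lambda>i. w (xg i) - p * xg i) ` {1..N})"
  have "m \<in> (\<lambda>i. w (xg i) - p * xg i) ` {1..N}" unfolding m_def using N by (intro Max_in) auto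
  then obtain k where k: "k \<in> {1..N}" "m = w (xg k) - p * xg k" by auto
  have "\<And>i. i \<in> {1..N} \<Longrightarrow> w (xg i) - p * xg i \<le> w (xg k) - p * xg k"
    unfolding k(2)[symmetric] m_def by (intro Max_ge) auto
  then show ?thesis using superdiff_at_grid[OF assms k(1)] k(1) by blast
qed

lemma S_bounds: assumes p: "p > 0" and x: "p \<in> superdiff v x" shows "xg 1 \<le> x \<and> x \<le> xg N"
proof
  show x1: "xg 1 \<le> x"
  proof (rule ccontr)
    assume "\<not> ?thesis" then show False using x v_def[of x] by (simp add: superdiff_def)
  qed
  show "x \<le> xg N"
  proof (rule ccontr)
    assume "\<not> ?thesis"
    then have xN: "x > xg N" by simp
    have "v (xg N) \<le> v x + ereal (p * (xg N - x))" by (rule superdiff_ineq[OF x])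
    moreover have "xg 1 \<le> xg N" using xg_le[of N] N by simp
    ultimately have "w (xg N) \<le> w x + p * (xg N - x)" using x1 v_def[of x] v_def[of "xg N"] by simp
    moreover have "p * (xg N - x) < 0" using p xN by (simp add: mult_pos_neg)
    ultimately show False using w_const[of x] xN by simp
  qed
qed

definition G :: "real \<Rightarrow> real" where "G p = real_of_ereal (gdagger v p)"

lemma gdag_v: assumes p: "p > 0"
  shows "gdagger v p = ereal (G p)" "xg 1 \<le> G p" "G p \<le> xg N"
proof -
  obtain k where k: "k \<in> {1..N}" "p \<in> superdiff v (xg k)" using S_nonempty[OF less_imp_le[OF p]] by blast
  have up: "gdagger v p \<le> ereal (xg N)"
  proof -
    have "gdagger v p \<le> ereal (xg k)" unfolding gdagger_def using k by (auto intro: Inf_lower)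
    then show ?thesis using xg_le[OF k(1)] by (simp add: order_trans)
  qed
  have lo: "ereal (xg 1) \<le> gdagger v p" unfolding gdagger_def
    by (rule Inf_greatest) (use S_bounds[OF p] in auto)
  have "gdagger v p = ereal (G p)" unfolding G_def using up lo by (cases "gdagger v p") auto
  then show "gdagger v p = ereal (G p)" "xg 1 \<le> G p" "G p \<le> xg N" using up lo by auto
qed

lemma G_antitone: assumes p: "0 < p" "p \<le> p'" shows "G p' \<le> G p"
proof (cases "p = p'")
  case False
  then have pp: "p < p'" using p by simp
  have "0 \<le> p'" using p by simp
  then obtain k where k: "k \<in> {1..N}" "p' \<in> superdiff v (xg k)" using S_nonempty by blast
  have "gdagger v p' \<le> gdagger v p" unfolding gdagger_def
  proof (rule Inf_greatest)
    fix z assume "z \<in> ereal ` {x. p \<in> superdiff v x}"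
    then obtain x where x: "z = ereal x" "p \<in> superdiff v x" by auto
    have "xg k \<le> x" using superdiff_mono[OF x(2) k(2) pp] .
    then have "Inf (ereal ` {x. p' \<in> superdiff v x}) \<le> ereal (xg k)" "ereal (xg k) \<le> z"
      using k x by (auto intro: Inf_lower)
    then show "Inf (ereal ` {x. p' \<in> superdiff v x}) \<le> z" by (rule order_trans)
  qed
  then show ?thesis using gdag_v(1)[of p] gdag_v(1)[of p'] p pp by simp
qed simp

lemma gdag_v_L: "\<exists>L>0. \<forall>p\<ge>L. gdagger v p = ereal (xg 1)"
proof -
  define L where "L = 1 + (\<Sum>i\<in>{1..N}. \<bar>w (xg i) - w (xg 1)\<bar> / (xg i - xg 1))"
  have nn: "\<And>i. i \<in> {1..N} \<Longrightarrow> 0 \<le> \<bar>w (xg i) - w (xg 1)\<bar> / (xg i - xg 1)"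
    using xg_le by (auto intro!: divide_nonneg_nonneg)
  have L0: "L > 0" unfolding L_def using nn by (smt (verit) sum_nonneg)
  have "gdagger v p = ereal (xg 1)" if pL: "p \<ge> L" for p
  proof -
    have p0: "p > 0" using L0 pL by simp
    have kmax: "w (xg i) - p * xg i \<le> w (xg 1) - p * xg 1" if i: "i \<in> {1..N}" for i
    proof (cases "i = 1")
      case False
      then have d: "xg i - xg 1 > 0" using grid[of 1 i] i by auto
      have "\<bar>w (xg i) - w (xg 1)\<bar> / (xg i - xg 1) \<le> (\<Sum>i\<in>{1..N}. \<bar>w (xg i) - w (xg 1)\<bar> / (xg i - xg 1))"
        using i nn by (intro member_le_sum) auto
      then have "\<bar>w (xg i) - w (xg 1)\<bar> / (xg i - xg 1) \<le> p" using pL unfolding L_def by simp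
      then have "\<bar>w (xg i) - w (xg 1)\<bar> \<le> p * (xg i - xg 1)" using d by (simp add: divide_le_eq)
      then show ?thesis by (simp add: algebra_simps)
    qed simp
    have one: "1 \<in> {1..N}" using N by simp
    have s1: "p \<in> superdiff v (xg 1)" by (rule superdiff_at_grid[OF _ one kmax]) (use p0 in auto)
    have "gdagger v p \<le> ereal (xg 1)" unfolding gdagger_def using s1 by (auto intro: Inf_lower)
    moreover have "ereal (xg 1) \<le> gdagger v p" unfolding gdagger_def
      by (rule Inf_greatest) (use S_bounds[OF p0] in auto)
    ultimately show ?thesis by simp
  qed
  then show ?thesis using L0 by blast
qed

lemma v_int_bounds: "min 0 (1 + w (xg 1)) \<le> 1 + real_of_ereal (v y) \<and> 1 + real_of_ereal (v y) \<le> 1"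
proof (cases "y < xg 1")
  case False
  then have "w (xg 1) \<le> w y" "w y \<le> 0" using w_mono w_nonpos[of y] by (auto simp: mono_on_def)
  then show ?thesis using False v_def[of y] by simp
qed (simp add: v_def)

end



context vset begin

definition Gt :: "real \<Rightarrow> real" where "Gt p = (if p > 0 then G p else xg N)"

lemma Gt_meas: "Gt \<in> borel_measurable borel"
proof -
  have "mono (\<lambda>p. - Gt p)"
  proof (rule monoI)
    fix p p' :: real assume "p \<le> p'"
    then show "- Gt p \<le> - Gt p'"
      unfolding Gt_def using G_antitone[of p p'] gdag_v(3)[of p'] by auto
  qed
  then have "(\<lambda>p. - Gt p) \<in> borel_measurable borel" by (rule borel_measurable_mono)
  then have "(\<lambda>p. - (- Gt p)) \<in> borel_measurable borel" by measurable
  then show ?thesis by simp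
qed

lemma J_lim:
  assumes K: "K > 0"
  shows "((\<lambda>\<eta>. integral {0..1} (\<lambda>x. e * qBS M x * real_of_ereal (gdagger v (\<eta> * K * qBS M x))))
           \<longlongrightarrow> e * xg 1) at_top"
proof -
  define I :: "real set" where "I = {0<..<1}"
  define F where "F = (\<lambda>\<eta> x. e * qBS M x * real_of_ereal (gdagger v (\<eta> * K * qBS M x)))"
  define sq where "sq = (\<lambda>\<eta> y. indicator I y * F (max \<eta> 1) y)"
  define B where "B = \<bar>e\<bar> * (\<bar>xg 1\<bar> + \<bar>xg N\<bar>)"
  define wb where "wb = (\<lambda>y. B * (indicator I y *\<^sub>R qq M y))"
  define lim where "lim = (\<lambda>y. (e * xg 1) * (indicator I y *\<^sub>R qq M y))"
  have qint: "integrable lborel (\<lambda>y. indicator I y *\<^sub>R qq M y)"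
    using q_int(1)[of M] unfolding I_def set_integrable_def .
  have qcont: "continuous_on I (qq M)"
    unfolding I_def by (intro continuous_at_imp_continuous_on ballI qq_cont) auto
  have qmeas: "(\<lambda>y. indicator I y *\<^sub>R qq M y) \<in> borel_measurable borel"
    by (rule borel_measurable_continuous_on_indicator[OF _ qcont]) (auto simp: I_def)
  have F_on_I: "F \<eta> y = e * qq M y * G (\<eta> * K * qq M y)" if "y \<in> I" for \<eta> y
    using that unfolding F_def G_def I_def by (simp add: qBS_eq)
  have sq_eq: "sq \<eta> = (\<lambda>y. e * (indicator I y *\<^sub>R qq M y) * Gt ((max \<eta> 1 * K) * (indicator I y *\<^sub>R qq M y)))" for \<eta>
  proof
    fix y show "sq \<eta> y = e * (indicator I y *\<^sub>R qq M y) * Gt ((max \<eta> 1 * K) * (indicator I y *\<^sub>R qq M y))"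
    proof (cases "y \<in> I")
      case True
      have "max \<eta> 1 * K * qq M y > 0" using K qq_pos[of M y] by (simp add: max_def)
      then show ?thesis using True unfolding sq_def F_on_I[OF True] Gt_def by (simp add: mult.assoc)
    qed (simp add: sq_def)
  qed
  have sq_meas: "sq \<eta> \<in> borel_measurable lborel" for \<eta>
  proof -
    have "(\<lambda>y. Gt ((max \<eta> 1 * K) * (indicator I y *\<^sub>R qq M y))) \<in> borel_measurable borel"
      by (rule measurable_compose[OF _ Gt_meas]) (use qmeas in measurable)
    then show ?thesis unfolding sq_eq using qmeas by measurable
  qed
  have bound: "norm (sq \<eta> y) \<le> wb y" for \<eta> y
  proof (cases "y \<in> I")
    case True
    have pos: "max \<eta> 1 * K * qq M y > 0" using K qq_pos[of M y] by (simp add: max_def)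
    have "\<bar>G (max \<eta> 1 * K * qq M y)\<bar> \<le> \<bar>xg 1\<bar> + \<bar>xg N\<bar>"
      using gdag_v(2,3)[OF pos] by linarith
    then have "\<bar>e\<bar> * qq M y * \<bar>G (max \<eta> 1 * K * qq M y)\<bar> \<le> \<bar>e\<bar> * qq M y * (\<bar>xg 1\<bar> + \<bar>xg N\<bar>)"
      using qq_pos[of M y] by (intro mult_left_mono) auto
    then show ?thesis using True qq_pos[of M y] unfolding sq_def F_on_I[OF True] wb_def B_def
      by (simp add: abs_mult algebra_simps)
  qed (simp add: sq_def wb_def)
  obtain L where L: "L > 0" "\<And>p. p \<ge> L \<Longrightarrow> gdagger v p = ereal (xg 1)" using gdag_v_L by blast
  have pw: "((\<lambda>\<eta>. sq \<eta> y) \<longlongrightarrow> lim y) at_top" for y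
  proof (cases "y \<in> I")
    case True
    have qp: "qq M y > 0" by (rule qq_pos)
    have "eventually (\<lambda>\<eta>. sq \<eta> y = lim y) at_top"
      using eventually_ge_at_top[of "max 1 (L / (K * qq M y))"]
    proof eventually_elim
      case (elim \<eta>)
      have "L \<le> \<eta> * (K * qq M y)" using elim K qp by (simp add: field_simps)
      then have "gdagger v (\<eta> * K * qq M y) = ereal (xg 1)" using L(2) by (simp add: mult.assoc)
      then have "G (\<eta> * K * qq M y) = xg 1" unfolding G_def by simp
      moreover have "max \<eta> 1 = \<eta>" using elim by simp
      ultimately show ?case using True unfolding sq_def lim_def F_on_I[OF True] by simp
    qed
    then show ?thesis by (rule tendsto_eventually)
  qed (simp add: sq_def lim_def)
  have L1: "((\<lambda>t. integral\<^sup>L lborel (sq t)) \<longlongrightarrow> integral\<^sup>L lborel lim) at_top"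
  proof (rule integral_dominated_convergence_at_top[where w=wb])
    show "lim \<in> borel_measurable lborel" unfolding lim_def using qmeas by measurable
    show "integrable lborel wb" unfolding wb_def using qint by simp
  qed (use sq_meas pw bound in auto)
  have L2: "integral\<^sup>L lborel lim = e * xg 1"
    using q_int(2)[of M] unfolding lim_def I_def set_lebesgue_integral_def by simp
  have ev: "eventually (\<lambda>\<eta>. integral\<^sup>L lborel (sq \<eta>) = integral {0..1} (F \<eta>)) at_top"
    using eventually_ge_at_top[of 1]
  proof eventually_elim
    case (elim \<eta>)
    have sqint: "integrable lborel (sq \<eta>)"
    proof (rule Bochner_Integration.integrable_bound[where f=wb])
      show "integrable lborel wb" unfolding wb_def using qint by simp
      show "sq \<eta> \<in> borel_measurable lborel" using sq_meas by simp
      show "AE x in lborel. norm (sq \<eta> x) \<le> norm (wb x)" by (intro AE_I2 order_trans[OF bound]) simp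
    qed
    have si: "set_integrable lborel I (F \<eta>)"
      using sqint elim unfolding sq_def set_integrable_def by (simp add: max_def)
    have "integral {0..1} (F \<eta>) = integral I (F \<eta>)"
      by (rule integral_spike_set; rule negligible_subset[of "{0,1}"]) (auto simp: I_def)
    also have "\<dots> = (LINT y : I | lborel. F \<eta> y)" using set_borel_integral_eq_integral(2)[OF si] by simp
    also have "\<dots> = integral\<^sup>L lborel (sq \<eta>)" unfolding set_lebesgue_integral_def sq_def using elim
      by (simp add: max_def)
    finally show ?case by simp
  qed
  have "((\<lambda>\<eta>. integral {0..1} (F \<eta>)) \<longlongrightarrow> e * xg 1) at_top"
    using tendsto_cong[OF ev] L1 L2 by simp
  then show ?thesis unfolding F_def .
qed

end



theorem mainTheorem11:
  fixes u v :: "real \<Rightarrow> ereal" and w :: "real \<Rightarrow> real" and xg :: "nat \<Rightarrow> real"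
    and N C :: nat and s \<mu> r \<sigma> dt :: real
  assumes N: "1 \<le> N"
    and grid: "\<And>i j. 1 \<le> i \<Longrightarrow> i < j \<Longrightarrow> j \<le> N \<Longrightarrow> xg i < xg j"
    and v_def: "\<And>x. v x = (if x < xg 1 then -\<infinity> else ereal (w x))"
    and w_lin: "\<And>i x. 1 \<le> i \<Longrightarrow> i < N \<Longrightarrow> x \<in> {xg i..xg (Suc i)} \<Longrightarrow>
                 w x = w (xg i) + (w (xg (Suc i)) - w (xg i)) / (xg (Suc i) - xg i) * (x - xg i)"
    and w_const: "\<And>x. x \<ge> xg N \<Longrightarrow> w x = w (xg N)"
    and w_concave: "concave_on {xg 1..} w"
    and w_mono: "mono_on {xg 1..} w"
    and w_nonpos: "\<And>x. x \<ge> xg 1 \<Longrightarrow> w x \<le> 0"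
    and u_fin: "\<And>x. u x \<noteq> \<infinity>"
    and u_concave: "econcave u"
    and u_mono: "mono u"
    and udag_fin: "\<And>p. p > 0 \<Longrightarrow> \<bar>gdagger u p\<bar> \<noteq> \<infinity>"
    and udag_cont: "continuous_on {0<..} (\<lambda>p. real_of_ereal (gdagger u p))"
    and udag_lim: "(gdagger u \<longlongrightarrow> \<infinity>) (at_right 0)"
    and s: "0 < s" "s < 1"
    and C: "C \<in> {0, 1}"
    and \<sigma>: "\<sigma> > 0" and dt: "dt > 0"
  shows "((\<lambda>\<eta>. X_eta u v s C r dt (Mpar \<mu> r \<sigma> dt) \<eta>) \<longlongrightarrow>
            gamma_min u + ereal (s ^ C * exp (- r * dt) * xg 1)) at_top"
proof -
  interpret V: vset v w xg N
    by (unfold_locales) (fact N grid v_def w_lin w_const w_mono w_nonpos)+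
  define M where "M = Mpar \<mu> r \<sigma> dt"
  define K where "K = s powr (real C - 1) * exp (- r * dt)"
  have K: "K > 0" unfolding K_def using s by simp
  have feq: "f_eta v s C r dt M \<eta> x = real_of_ereal (gdagger v (\<eta> * K * qBS M x))" for \<eta> x
    by (simp add: f_eta_def K_def mult.assoc)
  have J: "((\<lambda>\<eta>. integral {0..1} (\<lambda>x. exp (- r * dt) * qBS M x * f_eta v s C r dt M \<eta> x))
           \<longlongrightarrow> exp (- r * dt) * xg 1) at_top"
    unfolding feq by (rule V.J_lim[OF K])
  have J2: "((\<lambda>\<eta>. ereal (s ^ C * integral {0..1} (\<lambda>x. exp (- r * dt) * qBS M x * f_eta v s C r dt M \<eta> x)))
           \<longlongrightarrow> ereal (s ^ C * (exp (- r * dt) * xg 1))) at_top"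
    by (intro tendsto_ereal tendsto_mult tendsto_const J)
  define m where "m = min 0 (1 + w (xg 1))"
  define Iv where "Iv \<eta> = integral {0..1} (\<lambda>x. 1 + real_of_ereal (v (f_eta v s C r dt M \<eta> x)))" for \<eta>
  have Ib: "m \<le> Iv \<eta> \<and> Iv \<eta> \<le> 1" for \<eta>
  proof (cases "(\<lambda>x. 1 + real_of_ereal (v (f_eta v s C r dt M \<eta> x))) integrable_on {0..1}")
    case True
    note int = True
    have "integral {0..1} (\<lambda>x::real. m) \<le> Iv \<eta>" unfolding Iv_def
      by (intro integral_le int integrable_const_ivl) (use V.v_int_bounds in \<open>auto simp: m_def\<close>)
    moreover have "Iv \<eta> \<le> integral {0..1} (\<lambda>x::real. 1)" unfolding Iv_def
      by (intro integral_le int integrable_const_ivl) (use V.v_int_bounds in auto)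
    ultimately show ?thesis by simp
  next
    case False
    then have "Iv \<eta> = 0" unfolding Iv_def by (rule not_integrable_integral)
    then show ?thesis by (simp add: m_def)
  qed
  define A where "A \<eta> = - (\<eta> / dt) * inverse (-1 + s * Iv \<eta>)" for \<eta>
  have geq: "gamma_eta u v s C r dt M \<eta> = gdagger u (A \<eta>)" for \<eta>
    by (simp add: gamma_eta_def Iv_def A_def)
  define E where "E = 1 - s * m"
  have m0: "m \<le> 0" unfolding m_def by simp
  have E1: "E \<ge> 1" unfolding E_def using s m0 by (simp add: mult_nonneg_nonpos)
  have "filterlim A at_top at_top"
    unfolding filterlim_at_top
  proof
    fix Z :: real
    show "eventually (\<lambda>\<eta>. Z \<le> A \<eta>) at_top"
      using eventually_ge_at_top[of "max 0 (Z * dt * E)"]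
    proof eventually_elim
      case (elim \<eta>)
      define D where "D = 1 - s * Iv \<eta>"
      have "s * Iv \<eta> \<le> s * 1" using Ib[of \<eta>] s by (intro mult_left_mono) auto
      then have D0: "D > 0" unfolding D_def using s by linarith
      have "s * m \<le> s * Iv \<eta>" using Ib[of \<eta>] s by (simp add: mult_left_mono)
      then have DE: "D \<le> E" unfolding D_def E_def by simp
      have Aeq: "A \<eta> = (\<eta> / dt) / D" unfolding A_def D_def
        by (simp add: divide_simps inverse_eq_divide) (simp add: algebra_simps)
      have eta0: "\<eta> \<ge> 0" using elim by simp
      have "(\<eta> / dt) / E \<le> (\<eta> / dt) / D"
        using D0 DE eta0 dt by (intro divide_left_mono) auto
      moreover have "Z \<le> (\<eta> / dt) / E"
      proof -
        have "Z * dt * E \<le> \<eta>" using elim by simp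
        then show ?thesis using dt E1 by (simp add: field_simps)
      qed
      ultimately show ?case unfolding Aeq by simp
    qed
  qed
  then have G: "((\<lambda>\<eta>. gamma_eta u v s C r dt M \<eta>) \<longlongrightarrow> gamma_min u) at_top"
    unfolding geq using filterlim_compose[OF Submission.udag_lim[OF udag_fin u_mono]] by blast
  have "((\<lambda>\<eta>. X_eta u v s C r dt M \<eta>) \<longlongrightarrow> gamma_min u + ereal (s ^ C * (exp (- r * dt) * xg 1))) at_top"
    unfolding X_eta_def by (rule tendsto_add_ereal_general1[OF _ G J2]) simp
  then show ?thesis unfolding M_def by (simp add: mult.assoc)
qed

end
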